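(* The semigroup $s\mathcal{R}(\mathfrak{S}_n)=\mathcal{R}(\mathfrak{S}_n)\setminus\mathfrak{S}_n$ is generated by the elements $z^r_{i,j}$ and $e_{i,j}$ ($r\in[n-1]$, $i,j\in[n]$, $i<j$).
   Context: $\mathfrak{C}_n$ is the partition monoid (set partitions of $[2n]$, top points $1..n$, bottom $n+1..2n$, concatenation product $*$). $I\preceq J$ means each block of $J$ is a union of blocks of $I$. $\mathfrak{S}_n\subseteq\mathfrak{C}_n$ consists of the partitions with all blocks $\{i,n+j\}$; $s_r$ are the simple transpositions; $1=\{\{i,n+i\}\}$. $\mathcal{R}(\mathfrak{S}_n)$ is the monoid of pairs $(I,J)$ of set partitions of $[2n]$ with $I\in\mathfrak{S}_n$, $I\preceq J$, product $(I,J)(H,K)=(I*H,J*K)$; $\mathfrak{S}_n$ is identified with $\{(w,w)\}$. For $i<j$, $e_{i,j}=(1,J_{i,j})$, where $J_{i,j}$ is obtained from $1$ by merging the blocks $\{i,n+i\}$ and $\{j,n+j\}$, and $z^r_{i,j}=e_{i,j}s_r$. *)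

theory Defs
  imports "HOL-Library.Disjoint_Sets"
begin

type_synonym setpart = "nat set set"

text \<open>Set partitions of [2n]: top points 1..n, bottom points n+1..2n.\<close>
definition setparts :: "nat \<Rightarrow> setpart set" where
  "setparts n = {P. partition_on {1..2*n} P}"

text \<open>Concatenation product in the partition monoid C_n: I is placed on top of H,
  the bottom row of I (points n+1..2n) is identified with the top row of H.
  Points of I keep their labels (1..2n); a point y of H is relabelled y+n, so
  the top row of H becomes n+1..2n and its bottom row becomes 2n+1..3n.
  Blocks of the product are the connected components restricted to the outer rows.\<close>
definition pm_link :: "nat \<Rightarrow> setpart \<Rightarrow> setpart \<Rightarrow> (nat \<times> nat) set" where
  "pm_link n I H =
     {(a, b). \<exists>B\<in>I. a \<in> B \<and> b \<in> B} \<union> {(a + n, b + n) | a b. \<exists>B\<in>H. a \<in> B \<and> b \<in> B}"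

definition pm_lift :: "nat \<Rightarrow> nat \<Rightarrow> nat" where
  "pm_lift n p = (if p \<le> n then p else p + n)"

definition pm_mult :: "nat \<Rightarrow> setpart \<Rightarrow> setpart \<Rightarrow> setpart" where
  "pm_mult n I H =
     (\<lambda>p. {q \<in> {1..2*n}. (pm_lift n p, pm_lift n q) \<in> (pm_link n I H)\<^sup>*}) ` {1..2*n}"

definition refines :: "setpart \<Rightarrow> setpart \<Rightarrow> bool" where
  "refines I J \<longleftrightarrow> (\<forall>B\<in>J. \<exists>S\<subseteq>I. B = \<Union>S)"

definition symgrp :: "nat \<Rightarrow> setpart set" where
  "symgrp n = {P \<in> setparts n. \<forall>B\<in>P. \<exists>i\<in>{1..n}. \<exists>j\<in>{1..n}. B = {i, n + j}}"

definition pm_one :: "nat \<Rightarrow> setpart" where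
  "pm_one n = (\<lambda>i. {i, n + i}) ` {1..n}"

definition simple_transp :: "nat \<Rightarrow> nat \<Rightarrow> setpart" where
  "simple_transp n r =
     (\<lambda>i. {i, n + (if i = r then r + 1 else if i = r + 1 then r else i)}) ` {1..n}"

definition RS :: "nat \<Rightarrow> (setpart \<times> setpart) set" where
  "RS n = {(I, J). I \<in> symgrp n \<and> J \<in> setparts n \<and> refines I J}"

definition RS_mult :: "nat \<Rightarrow> setpart \<times> setpart \<Rightarrow> setpart \<times> setpart \<Rightarrow> setpart \<times> setpart" where
  "RS_mult n x y = (pm_mult n (fst x) (fst y), pm_mult n (snd x) (snd y))"

definition RS_sym :: "nat \<Rightarrow> (setpart \<times> setpart) set" where
  "RS_sym n = (\<lambda>w. (w, w)) ` symgrp n"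

definition Jmerge :: "nat \<Rightarrow> nat \<Rightarrow> nat \<Rightarrow> setpart" where
  "Jmerge n i j = (pm_one n - {{i, n + i}, {j, n + j}}) \<union> {{i, n + i, j, n + j}}"

definition e_gen :: "nat \<Rightarrow> nat \<Rightarrow> nat \<Rightarrow> setpart \<times> setpart" where
  "e_gen n i j = (pm_one n, Jmerge n i j)"

definition z_gen :: "nat \<Rightarrow> nat \<Rightarrow> nat \<Rightarrow> nat \<Rightarrow> setpart \<times> setpart" where
  "z_gen n r i j = RS_mult n (e_gen n i j) (simple_transp n r, simple_transp n r)"

inductive_set gen_semigroup :: "('a \<Rightarrow> 'a \<Rightarrow> 'a) \<Rightarrow> 'a set \<Rightarrow> 'a set"
  for mult :: "'a \<Rightarrow> 'a \<Rightarrow> 'a" and G :: "'a set" where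
  base: "x \<in> G \<Longrightarrow> x \<in> gen_semigroup mult G"
| step: "x \<in> gen_semigroup mult G \<Longrightarrow> y \<in> gen_semigroup mult G \<Longrightarrow> mult x y \<in> gen_semigroup mult G"

end

theory Submission
  imports Defs "HOL-Combinatorics.Permutations"
begin

definition sb :: "setpart \<Rightarrow> (nat \<times> nat) set" where
  "sb P = {(x,y). \<exists>p\<in>P. x \<in> p \<and> y \<in> p}"

lemma part_eq_sb:
  assumes "partition_on A P" "partition_on A Q" "sb P = sb Q" shows "P = Q"
proof -
  have "P = A // sb P" using partition_on_eq_quotient[OF assms(1)] unfolding sb_def by simp
  also have "\<dots> = A // sb Q" using assms(3) by simp
  also have "\<dots> = Q" using partition_on_eq_quotient[OF assms(2)] unfolding sb_def by simp
  finally show ?thesis .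
qed

lemma sb_quot:
  assumes "equiv A r" shows "sb (A//r) = r"
proof
  show "sb (A//r) \<subseteq> r" using assms in_quotient_imp_in_rel by (fastforce simp: sb_def)
  show "r \<subseteq> sb (A//r)"
  proof
    fix z assume z: "z \<in> r"
    obtain x y where zz: "z = (x,y)" by fastforce
    have xA: "x \<in> A" using z zz assms equiv_type by blast
    have "r``{x} \<in> A//r" using xA by (rule quotientI)
    moreover have "x \<in> r``{x}" using assms xA equiv_class_self by metis
    moreover have "y \<in> r``{x}" using z zz by auto
    ultimately show "z \<in> sb (A//r)" unfolding sb_def zz by blast
  qed
qed

lemma sb_sym: "(x,y) \<in> sb P \<Longrightarrow> (y,x) \<in> sb P" by (auto simp: sb_def)

lemma sb_trans: "partition_on A P \<Longrightarrow> (x,y) \<in> sb P \<Longrightarrow> (y,z) \<in> sb P \<Longrightarrow> (x,z) \<in> sb P"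
  using equiv_partition_on[of A P] unfolding sb_def equiv_def trans_def by blast

lemma sb_refl: "partition_on A P \<Longrightarrow> x \<in> A \<Longrightarrow> (x,x) \<in> sb P"
  using equiv_partition_on[of A P] unfolding sb_def equiv_def refl_on_def by blast

lemma sb_sub: "partition_on A P \<Longrightarrow> (x,y) \<in> sb P \<Longrightarrow> x \<in> A \<and> y \<in> A"
  unfolding sb_def partition_on_def by blast

definition Rm :: "nat \<Rightarrow> setpart \<Rightarrow> setpart \<Rightarrow> (nat \<times> nat) set" where
  "Rm n I H = {(p,q). p \<in> {1..2*n} \<and> q \<in> {1..2*n} \<and> (pm_lift n p, pm_lift n q) \<in> (pm_link n I H)\<^sup>*}"

lemma sym_link: "sym (pm_link n I H)"
  unfolding sym_def pm_link_def by blast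

lemma equiv_Rm: "equiv {1..2*n} (Rm n I H)"
proof (rule equivI)
  show "Rm n I H \<subseteq> {1..2*n} \<times> {1..2*n}" unfolding Rm_def by auto
  show "refl_on {1..2*n} (Rm n I H)" unfolding Rm_def refl_on_def by auto
  show "sym (Rm n I H)" using sym_rtrancl[OF sym_link[of n I H]] unfolding Rm_def sym_def by blast
  show "trans (Rm n I H)" unfolding Rm_def trans_def by (auto intro: rtrancl_trans)
qed

lemma pm_mult_quot: "pm_mult n I H = {1..2*n} // Rm n I H"
proof -
  have q: "{1..2*n} // Rm n I H = (\<lambda>x. Rm n I H``{x}) ` {1..2*n}"
    unfolding quotient_def by blast
  show ?thesis unfolding q pm_mult_def
    by (rule image_cong) (auto simp: Rm_def)
qed

lemma pm_mult_part: "partition_on {1..2*n} (pm_mult n I H)"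
  unfolding pm_mult_quot by (rule partition_on_quotient[OF equiv_Rm])

lemma sb_pm_mult: "sb (pm_mult n I H) = Rm n I H"
  unfolding pm_mult_quot by (rule sb_quot[OF equiv_Rm])

lemma refines_iff:
  assumes P: "partition_on A P" and Q: "partition_on A Q"
  shows "refines P Q \<longleftrightarrow> sb P \<subseteq> sb Q"
proof
  assume r: "refines P Q"
  show "sb P \<subseteq> sb Q"
  proof
    fix z assume "z \<in> sb P"
    then obtain x y p where z: "z = (x,y)" "p \<in> P" "x \<in> p" "y \<in> p" unfolding sb_def by blast
    then have "x \<in> A" using P partition_onD1 by blast
    then obtain B where B: "B \<in> Q" "x \<in> B" using Q partition_onD1 by blast
    then obtain S where S: "S \<subseteq> P" "B = \<Union>S" using r unfolding refines_def by blast
    then obtain p' where p': "p' \<in> S" "x \<in> p'" using B by blast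
    then have "p' = p" using z S P partition_onD2 unfolding disjoint_def by blast
    then show "z \<in> sb Q" using z B S p' unfolding sb_def by blast
  qed
next
  assume s: "sb P \<subseteq> sb Q"
  show "refines P Q" unfolding refines_def
  proof
    fix B assume B: "B \<in> Q"
    let ?S = "{p \<in> P. p \<subseteq> B}"
    have "B = \<Union>?S"
    proof
      show "\<Union>?S \<subseteq> B" by blast
      show "B \<subseteq> \<Union>?S"
      proof
        fix x assume x: "x \<in> B"
        then have "x \<in> A" using B Q partition_onD1 by blast
        then obtain p where p: "p \<in> P" "x \<in> p" using P partition_onD1 by blast
        have "p \<subseteq> B"
        proof
          fix y assume "y \<in> p"
          then have "(x,y) \<in> sb Q" using s p unfolding sb_def by blast
          then obtain B' where "B' \<in> Q" "x \<in> B'" "y \<in> B'" unfolding sb_def by blast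
          then show "y \<in> B" using x B Q partition_onD2 unfolding disjoint_def by blast
        qed
        then show "x \<in> \<Union>?S" using p by blast
      qed
    qed
    then show "\<exists>S\<subseteq>P. B = \<Union>S" by (intro exI[of _ ?S]) auto
  qed
qed

lemma link_J: "(x,y) \<in> sb J \<Longrightarrow> (x,y) \<in> pm_link n J K"
  unfolding pm_link_def sb_def by blast

lemma link_K: "(a,b) \<in> sb K \<Longrightarrow> (a+n,b+n) \<in> pm_link n J K"
  unfolding pm_link_def sb_def by blast

lemma link_cases: "(z1,z2) \<in> pm_link n J K \<Longrightarrow>
   (z1,z2) \<in> sb J \<or> (\<exists>a b. (a,b) \<in> sb K \<and> z1 = a+n \<and> z2 = b+n)"
  unfolding pm_link_def sb_def by blast

definition Pw :: "nat \<Rightarrow> (nat \<Rightarrow> nat) \<Rightarrow> setpart" where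
  "Pw n w = (\<lambda>k. {k, n + w k}) ` {1..n}"

definition Kv :: "nat \<Rightarrow> (nat \<Rightarrow> nat) \<Rightarrow> nat \<Rightarrow> nat \<Rightarrow> setpart" where
  "Kv n v i j = (\<lambda>k. {k, n + v k}) ` ({1..n} - {i,j}) \<union> {{i, j, n + v i, n + v j}}"

definition tau :: "nat \<Rightarrow> (nat \<Rightarrow> nat) \<Rightarrow> nat \<Rightarrow> nat" where
  "tau n v x = (if x \<le> n then x else n + v (x - n))"

definition mrg :: "(nat \<times> nat) set \<Rightarrow> nat \<Rightarrow> nat \<Rightarrow> (nat \<times> nat) set" where
  "mrg R a b = R \<union> {(x,y). ((x,a) \<in> R \<or> (x,b) \<in> R) \<and> ((y,a) \<in> R \<or> (y,b) \<in> R)}"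

lemma Kv_same: assumes i: "i \<in> {1..n}" shows "Kv n v i i = Pw n v"
proof -
  have "Pw n v = (\<lambda>k. {k, n + v k}) ` insert i ({1..n} - {i})"
    unfolding Pw_def using insert_Diff[OF i] by simp
  also have "\<dots> = insert {i, n + v i} ((\<lambda>k. {k, n + v k}) ` ({1..n} - {i}))" by (simp only: image_insert)
  also have "\<dots> = Kv n v i i" unfolding Kv_def by simp
  finally show ?thesis by simp
qed

lemma sb_img_Un: "(x,y) \<in> sb (f ` S \<union> {B}) \<longleftrightarrow> (\<exists>k\<in>S. x \<in> f k \<and> y \<in> f k) \<or> (x \<in> B \<and> y \<in> B)"
  unfolding sb_def by auto

lemma sb_img: "(x,y) \<in> sb (f ` S) \<longleftrightarrow> (\<exists>k\<in>S. x \<in> f k \<and> y \<in> f k)"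
  unfolding sb_def by auto

lemma sb_Kv: "(x,y) \<in> sb (Kv n v i j) \<longleftrightarrow>
  (\<exists>k\<in>{1..n}-{i,j}. x \<in> {k, n + v k} \<and> y \<in> {k, n + v k}) \<or>
  (x \<in> {i, j, n + v i, n + v j} \<and> y \<in> {i, j, n + v i, n + v j})"
  unfolding Kv_def sb_img_Un by (rule refl)

lemma sb_Pw: "(x,y) \<in> sb (Pw n v) \<longleftrightarrow> (\<exists>k\<in>{1..n}. x \<in> {k, n + v k} \<and> y \<in> {k, n + v k})"
  unfolding Pw_def sb_img by (rule refl)

lemma perm_facts:
  assumes v: "v permutes {1..n}"
  shows "\<And>k. k \<in> {1..n} \<Longrightarrow> v k \<in> {1..n}" "\<And>a b. v a = v b \<longleftrightarrow> a = b"
    "\<And>m. v (inv v m) = m" "\<And>m. inv v (v m) = m" "\<And>m. m \<in> {1..n} \<Longrightarrow> inv v m \<in> {1..n}"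
proof -
  show "\<And>k. k \<in> {1..n} \<Longrightarrow> v k \<in> {1..n}" using permutes_in_image[OF v] by blast
  show "\<And>a b. v a = v b \<longleftrightarrow> a = b" using permutes_inj[OF v] unfolding inj_def by blast
  show "\<And>m. v (inv v m) = m" "\<And>m. inv v (v m) = m" using permutes_inverses[OF v] by auto
  show "\<And>m. m \<in> {1..n} \<Longrightarrow> inv v m \<in> {1..n}"
    using permutes_in_image[OF permutes_inv[OF v]] by blast
qed

lemma Kv_part:
  assumes v: "v permutes {1..n}" and i: "i \<in> {1..n}" and j: "j \<in> {1..n}"
  shows "partition_on {1..2*n} (Kv n v i j)"
proof (rule partition_onI)
  note pf = perm_facts[OF v]
  show "\<Union>(Kv n v i j) = {1..2*n}"
  proof
    show "\<Union>(Kv n v i j) \<subseteq> {1..2*n}" using i j pf(1) unfolding Kv_def by fastforce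
    show "{1..2*n} \<subseteq> \<Union>(Kv n v i j)"
    proof
      fix x assume x: "x \<in> {1..2*n}"
      show "x \<in> \<Union>(Kv n v i j)"
      proof (cases "x \<le> n")
        case True
        then show ?thesis using x unfolding Kv_def by (cases "x \<in> {i,j}") auto
      next
        case False
        define k where "k = inv v (x - n)"
        have xn: "x - n \<in> {1..n}" using False x by auto
        have k: "k \<in> {1..n}" "x = n + v k" using False pf(3) pf(5)[OF xn] unfolding k_def by auto
        then show ?thesis unfolding Kv_def by (cases "k \<in> {i,j}") auto
      qed
    qed
  qed
  show "{} \<notin> Kv n v i j" unfolding Kv_def by blast
  fix p q assume p: "p \<in> Kv n v i j" and q: "q \<in> Kv n v i j" and pq: "p \<noteq> q"
  show "disjnt p q"
  proof -
    have vi: "\<And>k. k \<in> {1..n} - {i,j} \<Longrightarrow> v k \<noteq> v i \<and> v k \<noteq> v j" using pf(2) by auto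
    consider (a) k k' where "k \<in> {1..n} - {i,j}" "k' \<in> {1..n} - {i,j}" "p = {k, n + v k}" "q = {k', n + v k'}"
      | (b) k where "k \<in> {1..n} - {i,j}" "p = {k, n + v k}" "q = {i, j, n + v i, n + v j}"
      | (c) k where "k \<in> {1..n} - {i,j}" "q = {k, n + v k}" "p = {i, j, n + v i, n + v j}"
      | (d) "p = {i, j, n + v i, n + v j}" "q = {i, j, n + v i, n + v j}"
      using p q unfolding Kv_def by blast
    then show ?thesis
    proof cases
      case a
      then have "k \<noteq> k'" using pq by blast
      then have "v k \<noteq> v k'" using pf(2) by blast
      moreover have "v k \<ge> 1" "v k' \<ge> 1" using a pf(1) by auto
      ultimately show ?thesis using a \<open>k \<noteq> k'\<close> unfolding disjnt_def by auto
    next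
      case b
      moreover have "v k \<ge> 1" "v i \<ge> 1" "v j \<ge> 1" using b i j pf(1) by auto
      ultimately show ?thesis using vi[OF b(1)] i j unfolding disjnt_def by auto
    next
      case c
      moreover have "v k \<ge> 1" "v i \<ge> 1" "v j \<ge> 1" using c i j pf(1) by auto
      ultimately show ?thesis using vi[OF c(1)] i j unfolding disjnt_def by auto
    next
      case d
      then show ?thesis using pq by blast
    qed
  qed
qed

lemma Pw_part:
  assumes v: "v permutes {1..n}"
  shows "partition_on {1..2*n} (Pw n v)"
proof (cases "n = 0")
  case True then show ?thesis unfolding Pw_def by (simp add: partition_on_empty)
next
  case False
  then show ?thesis using Kv_part[OF v, of 1 1] Kv_same[of 1 n v] by auto
qed

lemma mrg_trans:
  assumes J: "partition_on A J"
    and xy: "(x,y) \<in> mrg (sb J) a b" and yz: "(y,z) \<in> mrg (sb J) a b"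
  shows "(x,z) \<in> mrg (sb J) a b"
  using xy yz sb_trans[OF J, of x y a] sb_trans[OF J, of x y b] sb_trans[OF J, of z y a]
    sb_trans[OF J, of z y b] sb_trans[OF J, of x y z] sb_sym[of y z]
  unfolding mrg_def by blast

lemma mrg_refl: "partition_on A J \<Longrightarrow> x \<in> A \<Longrightarrow> (x,x) \<in> mrg (sb J) a b"
  unfolding mrg_def using sb_refl by blast

lemma mrg_ab: "partition_on A J \<Longrightarrow> a \<in> A \<Longrightarrow> b \<in> A \<Longrightarrow> x \<in> {a,b} \<Longrightarrow> y \<in> {a,b}
   \<Longrightarrow> (x,y) \<in> mrg (sb J) a b"
  unfolding mrg_def using sb_refl by blast

lemma CL:
  assumes J: "partition_on {1..2*n} J" and v: "v permutes {1..n}"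
    and i: "i \<in> {1..n}" and j: "j \<in> {1..n}"
    and x: "x \<in> {1..2*n}" and y: "y \<in> {1..2*n}"
  shows "(tau n v x, tau n v y) \<in> sb (pm_mult n J (Kv n v i j)) \<longleftrightarrow> (x,y) \<in> mrg (sb J) (n+i) (n+j)"
proof -
  note pf = perm_facts[OF v]
  let ?A = "{1..2*n}"
  let ?K = "Kv n v i j"
  let ?L = "pm_link n J ?K"
  let ?M = "mrg (sb J) (n+i) (n+j)"
  define g where "g z = (if z \<le> 2*n then z else n + inv v (z - 2*n))" for z
  define lt where "lt z = pm_lift n (tau n v z)" for z
  have ni: "n+i \<in> ?A" and nj: "n+j \<in> ?A" using i j by auto
  have tauA: "tau n v z \<in> ?A" if "z \<in> ?A" for z
  proof (cases "z \<le> n")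
    case True then show ?thesis using that unfolding tau_def by auto
  next
    case False
    then have "z - n \<in> {1..n}" using that by auto
    then have "v (z - n) \<in> {1..n}" using pf(1) by blast
    then show ?thesis using False unfolding tau_def by auto
  qed
  have lt_eq: "lt z = (if z \<le> n then z else 2*n + v (z - n))" if "z \<in> ?A" for z
  proof (cases "z \<le> n")
    case True then show ?thesis unfolding lt_def tau_def pm_lift_def by auto
  next
    case False
    then have "z - n \<in> {1..n}" using that by auto
    then have "v (z - n) \<in> {1..n}" using pf(1) by blast
    then show ?thesis using False unfolding lt_def tau_def pm_lift_def by auto
  qed
  have g_lt: "g (lt z) = z" if "z \<in> ?A" for z
  proof (cases "z \<le> n")
    case True then show ?thesis using lt_eq[OF that] unfolding g_def by auto
  next
    case False
    then have "z - n \<in> {1..n}" using that by auto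
    then have "v (z - n) \<in> {1..n}" using pf(1) by blast
    then show ?thesis using False lt_eq[OF that] pf(4) unfolding g_def by auto
  qed
  have ga: "g (a + n) = n + k" if "k \<in> {1..n}" "a \<in> {k, n + v k}" for a k
  proof -
    have "v k \<in> {1..n}" using pf(1) that(1) by blast
    then show ?thesis using that pf(4) unfolding g_def by auto
  qed
  have edge: "(g z1, g z2) \<in> ?M" if "(z1,z2) \<in> ?L" for z1 z2
  proof -
    from link_cases[OF that] show ?thesis
    proof
      assume a: "(z1,z2) \<in> sb J"
      then have "z1 \<in> ?A" "z2 \<in> ?A" using sb_sub[OF J] by auto
      then have "g z1 = z1" "g z2 = z2" unfolding g_def by auto
      then show ?thesis using a unfolding mrg_def by auto
    next
      assume "\<exists>a b. (a,b) \<in> sb ?K \<and> z1 = a+n \<and> z2 = b+n"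
      then obtain a b where ab: "(a,b) \<in> sb ?K" "z1 = a+n" "z2 = b+n" by blast
      from ab(1)[unfolded sb_Kv] show ?thesis
      proof
        assume "\<exists>k\<in>{1..n}-{i,j}. a \<in> {k, n + v k} \<and> b \<in> {k, n + v k}"
        then obtain k where k: "k \<in> {1..n}" "a \<in> {k, n + v k}" "b \<in> {k, n + v k}" by blast
        have "g z1 = n + k" "g z2 = n + k" using ga[OF k(1) k(2)] ga[OF k(1) k(3)] ab by auto
        moreover have "n + k \<in> ?A" using k by auto
        ultimately show ?thesis using mrg_refl[OF J] by metis
      next
        assume big: "a \<in> {i, j, n + v i, n + v j} \<and> b \<in> {i, j, n + v i, n + v j}"
        have "g (c + n) \<in> {n+i, n+j}" if "c \<in> {i, j, n + v i, n + v j}" for c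
          using that ga[OF i, of c] ga[OF j, of c] by auto
        then have "g z1 \<in> {n+i, n+j}" "g z2 \<in> {n+i, n+j}" using big ab by auto
        then show ?thesis using mrg_ab[OF J ni nj] by blast
      qed
    qed
  qed
  have fwd: "z1 = z2 \<or> (g z1, g z2) \<in> ?M" if "(z1,z2) \<in> ?L\<^sup>*" for z1 z2
    using that
  proof (induction rule: rtrancl_induct)
    case base then show ?case by simp
  next
    case (step b c)
    have e: "(g b, g c) \<in> ?M" using edge[OF step(2)] .
    from step(3) show ?case
    proof
      assume "z1 = b" then show ?thesis using e by simp
    next
      assume "(g z1, g b) \<in> ?M" then show ?thesis using e mrg_trans[OF J] by blast
    qed
  qed
  have conn: "(z, lt z) \<in> ?L\<^sup>*" if "z \<in> ?A" for z
  proof (cases "z \<le> n")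
    case True then show ?thesis using lt_eq[OF that] by simp
  next
    case False
    define k where "k = z - n"
    have k: "k \<in> {1..n}" using False that unfolding k_def by auto
    have "(k, n + v k) \<in> sb ?K" unfolding sb_Kv using k by (cases "k \<in> {i,j}") auto
    then have "(k + n, n + v k + n) \<in> ?L" by (rule link_K)
    moreover have "k + n = z" "n + v k + n = lt z" using False lt_eq[OF that] unfolding k_def by auto
    ultimately show ?thesis by auto
  qed
  have symL: "sym (?L\<^sup>*)" by (rule sym_rtrancl[OF sym_link])
  have conn': "(lt z, z) \<in> ?L\<^sup>*" if "z \<in> ?A" for z
    using conn[OF that] symL unfolding sym_def by blast
  have ijL: "(a', b') \<in> ?L\<^sup>*" if "a' \<in> {n+i,n+j}" "b' \<in> {n+i,n+j}" for a' b'
  proof -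
    have "(i, j) \<in> sb ?K" "(j, i) \<in> sb ?K" unfolding sb_Kv by auto
    then have "(i+n, j+n) \<in> ?L" "(j+n, i+n) \<in> ?L" using link_K by blast+
    then show ?thesis using that by (auto simp: add.commute)
  qed
  have "(tau n v x, tau n v y) \<in> sb (pm_mult n J ?K) \<longleftrightarrow> (lt x, lt y) \<in> ?L\<^sup>*"
    unfolding sb_pm_mult Rm_def lt_def using tauA x y by auto
  also have "\<dots> \<longleftrightarrow> (x,y) \<in> ?M"
  proof
    assume "(lt x, lt y) \<in> ?L\<^sup>*"
    from fwd[OF this] show "(x,y) \<in> ?M"
    proof
      assume "lt x = lt y"
      then have "x = y" using g_lt x y by metis
      then show ?thesis using mrg_refl[OF J x] by simp
    next
      assume "(g (lt x), g (lt y)) \<in> ?M" then show ?thesis using g_lt x y by simp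
    qed
  next
    assume "(x,y) \<in> ?M"
    then have "(x,y) \<in> ?L\<^sup>*"
    proof (unfold mrg_def, elim UnE)
      assume "(x,y) \<in> sb J" then show ?thesis using link_J by blast
    next
      assume "(x,y) \<in> {(x,y). ((x,n+i) \<in> sb J \<or> (x,n+j) \<in> sb J) \<and> ((y,n+i) \<in> sb J \<or> (y,n+j) \<in> sb J)}"
      then obtain a' b' where ab: "a' \<in> {n+i,n+j}" "b' \<in> {n+i,n+j}" "(x,a') \<in> sb J" "(y,b') \<in> sb J"
        by blast
      have "(x,a') \<in> ?L\<^sup>*" using link_J[OF ab(3)] by blast
      moreover have "(b',y) \<in> ?L\<^sup>*" using link_J[OF sb_sym[OF ab(4)]] by blast
      ultimately show ?thesis using ijL[OF ab(1,2)] by (meson rtrancl_trans)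
    qed
    then show "(lt x, lt y) \<in> ?L\<^sup>*" using conn[OF y] conn'[OF x] by (meson rtrancl_trans)
  qed
  finally show ?thesis .
qed

lemma mrg_triv:
  assumes J: "partition_on A J" and ab: "(a,b) \<in> sb J"
  shows "mrg (sb J) a b = sb J"
  using ab sb_trans[OF J] sb_sym unfolding mrg_def by blast

lemma mrg_comm: "mrg R a b = mrg R b a"
  unfolding mrg_def by blast

lemma tau_pt:
  assumes v: "v permutes {1..n}" and x: "x \<in> {1..2*n}" and k: "k \<in> {1..n}"
  shows "tau n v x = k \<longleftrightarrow> x = k" "tau n v x = n + v k \<longleftrightarrow> x = n + k"
proof -
  note pf = perm_facts[OF v]
  have "\<not> x \<le> n \<Longrightarrow> v (x - n) \<ge> 1"
  proof -
    assume "\<not> x \<le> n"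
    then have "x - n \<in> {1..n}" using x by auto
    then show "v (x - n) \<ge> 1" using pf(1) by fastforce
  qed
  then show "tau n v x = k \<longleftrightarrow> x = k" using k x unfolding tau_def by auto
  show "tau n v x = n + v k \<longleftrightarrow> x = n + k"
  proof (cases "x \<le> n")
    case True
    have "v k \<ge> 1" using pf(1) k by auto
    then show ?thesis using True k unfolding tau_def by auto
  next
    case False
    then have "tau n v x = n + v (x - n)" unfolding tau_def by auto
    then show ?thesis using pf(2)[of "x - n" k] False by auto
  qed
qed

lemma tau_A: "v permutes {1..n} \<Longrightarrow> x \<in> {1..2*n} \<Longrightarrow> tau n v x \<in> {1..2*n}"
proof -
  assume v: "v permutes {1..n}" and x: "x \<in> {1..2*n}"
  show ?thesis
  proof (cases "x \<le> n")
    case False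
    then have "x - n \<in> {1..n}" using x by auto
    then have "v (x - n) \<in> {1..n}" using perm_facts(1)[OF v] by blast
    then show ?thesis using False unfolding tau_def by auto
  qed (use x in \<open>auto simp: tau_def\<close>)
qed

lemma tau_surj:
  assumes v: "v permutes {1..n}" and z: "z \<in> {1..2*n}"
  shows "\<exists>x\<in>{1..2*n}. z = tau n v x"
proof (cases "z \<le> n")
  case True then show ?thesis using z unfolding tau_def by (intro bexI[of _ z]) auto
next
  case False
  note pf = perm_facts[OF v]
  have zn: "z - n \<in> {1..n}" using False z by auto
  have "inv v (z - n) \<in> {1..n}" using pf(5)[OF zn] .
  then show ?thesis using False pf(3)[of "z - n"] unfolding tau_def
    by (intro bexI[of _ "n + inv v (z - n)"]) auto
qed

lemma tau_eq:
  assumes v: "v permutes {1..n}" and P: "partition_on {1..2*n} P" and Q: "partition_on {1..2*n} Q"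
    and h: "\<And>x y. x \<in> {1..2*n} \<Longrightarrow> y \<in> {1..2*n} \<Longrightarrow>
              (tau n v x, tau n v y) \<in> sb P \<longleftrightarrow> (tau n v x, tau n v y) \<in> sb Q"
  shows "P = Q"
proof (rule part_eq_sb[OF P Q])
  have "(a,b) \<in> sb P \<longleftrightarrow> (a,b) \<in> sb Q" for a b
  proof (cases "a \<in> {1..2*n} \<and> b \<in> {1..2*n}")
    case True
    then obtain x y where "x \<in> {1..2*n}" "y \<in> {1..2*n}" "a = tau n v x" "b = tau n v y"
      using tau_surj[OF v] by meson
    then show ?thesis using h by simp
  next
    case False then show ?thesis using sb_sub[OF P] sb_sub[OF Q] by blast
  qed
  then show "sb P = sb Q" by auto
qed

lemma sb_Kv_tau:
  assumes u: "u permutes {1..n}" and v: "v permutes {1..n}"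
    and i: "i \<in> {1..n}" and j: "j \<in> {1..n}"
    and x: "x \<in> {1..2*n}" and y: "y \<in> {1..2*n}"
  shows "(tau n v x, tau n v y) \<in> sb (Kv n (v \<circ> u) i j) \<longleftrightarrow> (x,y) \<in> sb (Kv n u i j)"
proof -
  have uk: "\<And>k. k \<in> {1..n} \<Longrightarrow> u k \<in> {1..n}" using perm_facts(1)[OF u] by blast
  have e1: "tau n v z \<in> {k, n + v (u k)} \<longleftrightarrow> z \<in> {k, n + u k}" if "z \<in> {1..2*n}" "k \<in> {1..n}" for z k
    using tau_pt[OF v that(1) that(2)] tau_pt[OF v that(1) uk[OF that(2)]] by auto
  have e2: "tau n v z \<in> {i, j, n + v (u i), n + v (u j)} \<longleftrightarrow> z \<in> {i, j, n + u i, n + u j}"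
    if "z \<in> {1..2*n}" for z
    using tau_pt[OF v that i] tau_pt[OF v that j] tau_pt[OF v that uk[OF i]] tau_pt[OF v that uk[OF j]]
    by auto
  show ?thesis unfolding sb_Kv o_def using e1[OF x] e1[OF y] e2[OF x] e2[OF y] by auto
qed

lemma sb_Pw_tau:
  assumes u: "u permutes {1..n}" and v: "v permutes {1..n}"
    and x: "x \<in> {1..2*n}" and y: "y \<in> {1..2*n}"
  shows "(tau n v x, tau n v y) \<in> sb (Pw n (v \<circ> u)) \<longleftrightarrow> (x,y) \<in> sb (Pw n u)"
proof -
  have uk: "\<And>k. k \<in> {1..n} \<Longrightarrow> u k \<in> {1..n}" using perm_facts(1)[OF u] by blast
  have e1: "tau n v z \<in> {k, n + v (u k)} \<longleftrightarrow> z \<in> {k, n + u k}" if "z \<in> {1..2*n}" "k \<in> {1..n}" for z k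
    using tau_pt[OF v that(1) that(2)] tau_pt[OF v that(1) uk[OF that(2)]] by auto
  show ?thesis unfolding sb_Pw o_def using e1[OF x] e1[OF y] by auto
qed

lemma tau_id: "x \<in> {1..2*n} \<Longrightarrow> tau n id x = x"
  unfolding tau_def by auto

lemma Pw_mult:
  assumes u: "u permutes {1..n}" and v: "v permutes {1..n}" and n: "n \<ge> 1"
  shows "pm_mult n (Pw n u) (Pw n v) = Pw n (v \<circ> u)"
proof -
  have one: "1 \<in> {1..n}" using n by auto
  have P: "partition_on {1..2*n} (Pw n u)" by (rule Pw_part[OF u])
  show ?thesis
  proof (rule tau_eq[OF v pm_mult_part Pw_part[OF permutes_compose[OF u v]]])
    fix x y assume x: "x \<in> {1..2*n}" and y: "y \<in> {1..2*n}"
    have "(tau n v x, tau n v y) \<in> sb (pm_mult n (Pw n u) (Pw n v)) \<longleftrightarrow> (x,y) \<in> mrg (sb (Pw n u)) (n+1) (n+1)"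
      using CL[OF P v one one x y] Kv_same[OF one] by simp
    also have "\<dots> \<longleftrightarrow> (x,y) \<in> sb (Pw n u)"
      using mrg_triv[OF P sb_refl[OF P, of "n+1"]] n by auto
    also have "\<dots> \<longleftrightarrow> (tau n v x, tau n v y) \<in> sb (Pw n (v \<circ> u))"
      using sb_Pw_tau[OF u v x y] by simp
    finally show "(tau n v x, tau n v y) \<in> sb (pm_mult n (Pw n u) (Pw n v)) \<longleftrightarrow>
        (tau n v x, tau n v y) \<in> sb (Pw n (v \<circ> u))" .
  qed
qed

lemma part_disj: "partition_on A P \<Longrightarrow> B \<in> P \<Longrightarrow> C \<in> P \<Longrightarrow> x \<in> B \<Longrightarrow> x \<in> C \<Longrightarrow> B = C"
  using partition_onD2 unfolding disjoint_def by blast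

lemma symgrp_Pw:
  assumes w: "w permutes {1..n}" shows "Pw n w \<in> symgrp n"
proof -
  have "\<forall>B\<in>Pw n w. \<exists>i\<in>{1..n}. \<exists>j\<in>{1..n}. B = {i, n + j}"
    using perm_facts(1)[OF w] unfolding Pw_def by blast
  then show ?thesis using Pw_part[OF w] unfolding symgrp_def setparts_def by blast
qed

lemma symgrp_E:
  assumes P: "P \<in> symgrp n"
  shows "\<exists>w. w permutes {1..n} \<and> P = Pw n w"
proof -
  have Pp: "partition_on {1..2*n} P" and blk: "\<forall>B\<in>P. \<exists>i\<in>{1..n}. \<exists>j\<in>{1..n}. B = {i, n + j}"
    using P unfolding symgrp_def setparts_def by auto
  have ex: "\<exists>j. j \<in> {1..n} \<and> {i, n + j} \<in> P" if i: "i \<in> {1..n}" for i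
  proof -
    have "i \<in> \<Union>P" using i partition_onD1[OF Pp] by auto
    then obtain B where B: "B \<in> P" "i \<in> B" by blast
    then obtain i' j where ij: "i' \<in> {1..n}" "j \<in> {1..n}" "B = {i', n + j}" using blk by blast
    then have "i = i'" using B i by auto
    then show ?thesis using ij B by blast
  qed
  define w where "w i = (if i \<in> {1..n} then (SOME j. j \<in> {1..n} \<and> {i, n + j} \<in> P) else i)" for i
  have w1: "w i \<in> {1..n} \<and> {i, n + w i} \<in> P" if i: "i \<in> {1..n}" for i
    using someI_ex[OF ex[OF i]] i unfolding w_def by simp
  have inj: "inj_on w {1..n}"
  proof (rule inj_onI)
    fix a b assume a: "a \<in> {1..n}" and b: "b \<in> {1..n}" and e: "w a = w b"
    have "{a, n + w a} = {b, n + w b}"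
      using part_disj[OF Pp, of "{a, n + w a}" "{b, n + w b}" "n + w b"] w1[OF a] w1[OF b] e by auto
    then show "a = b" using a b w1[OF a] by (auto simp: doubleton_eq_iff)
  qed
  have wp: "w permutes {1..n}"
    by (rule inj_imp_permutes[OF inj]) (use w1 in \<open>auto simp: w_def\<close>)
  have "P = Pw n w"
  proof
    show "Pw n w \<subseteq> P" using w1 unfolding Pw_def by auto
    show "P \<subseteq> Pw n w"
    proof
      fix B assume B: "B \<in> P"
      then obtain i j where ij: "i \<in> {1..n}" "j \<in> {1..n}" "B = {i, n + j}" using blk by blast
      have "B = {i, n + w i}" using part_disj[OF Pp B, of "{i, n + w i}" i] w1[OF ij(1)] ij by auto
      then show "B \<in> Pw n w" using ij unfolding Pw_def by auto
    qed
  qed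
  then show ?thesis using wp by blast
qed

lemma NE:
  assumes J: "partition_on {1..2*n} J" and u: "u permutes {1..n}"
    and sub: "sb (Pw n u) \<subseteq> sb J"
    and no: "\<And>a b. a \<in> {1..n} \<Longrightarrow> b \<in> {1..n} \<Longrightarrow> (a,b) \<in> sb J \<Longrightarrow> a = b"
  shows "J = Pw n u"
proof (rule part_eq_sb[OF J Pw_part[OF u]])
  note pf = perm_facts[OF u]
  define t where "t x = (if x \<le> n then x else inv u (x - n))" for x
  have t: "t x \<in> {1..n} \<and> x \<in> {t x, n + u (t x)}" if x: "x \<in> {1..2*n}" for x
  proof (cases "x \<le> n")
    case True then show ?thesis using x unfolding t_def by auto
  next
    case False
    then have xn: "x - n \<in> {1..n}" using x by auto
    then show ?thesis using False pf(3)[of "x - n"] pf(5)[OF xn] unfolding t_def by auto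
  qed
  have tJ: "(x, t x) \<in> sb J" if x: "x \<in> {1..2*n}" for x
  proof -
    have "(t x, x) \<in> sb (Pw n u)" unfolding sb_Pw using t[OF x] by blast
    then show ?thesis using sub sb_sym by blast
  qed
  show "sb J = sb (Pw n u)"
  proof
    show "sb J \<subseteq> sb (Pw n u)"
    proof
      fix z assume z: "z \<in> sb J"
      obtain x y where xy: "z = (x,y)" by fastforce
      have x: "x \<in> {1..2*n}" and y: "y \<in> {1..2*n}" using sb_sub[OF J] z xy by auto
      have "(t x, t y) \<in> sb J"
        using sb_trans[OF J sb_trans[OF J sb_sym[OF tJ[OF x]] z[unfolded xy]] tJ[OF y]] .
      then have "t x = t y" using no t[OF x] t[OF y] by blast
      then show "z \<in> sb (Pw n u)" unfolding xy sb_Pw using t[OF x] t[OF y] by metis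
    qed
  qed (rule sub)
qed

lemma pm_one_Pw: "pm_one n = Pw n id"
  unfolding pm_one_def Pw_def by simp

lemma st_Pw: "simple_transp n r = Pw n (Transposition.transpose r (Suc r))"
  unfolding simple_transp_def Pw_def by (rule image_cong) (auto simp: transpose_def)

lemma Jmerge_Kv:
  assumes i: "i \<in> {1..n}" and j: "j \<in> {1..n}" and ij: "i \<noteq> j"
  shows "Jmerge n i j = Kv n id i j"
proof -
  have "pm_one n - {{i, n + i}, {j, n + j}} = (\<lambda>k. {k, n + k}) ` ({1..n} - {i, j})"
  proof
    show "pm_one n - {{i, n + i}, {j, n + j}} \<subseteq> (\<lambda>k. {k, n + k}) ` ({1..n} - {i, j})"
      unfolding pm_one_def by auto
    show "(\<lambda>k. {k, n + k}) ` ({1..n} - {i, j}) \<subseteq> pm_one n - {{i, n + i}, {j, n + j}}"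
    proof
      fix B assume "B \<in> (\<lambda>k. {k, n + k}) ` ({1..n} - {i, j})"
      then obtain k where k: "k \<in> {1..n}" "k \<noteq> i" "k \<noteq> j" "B = {k, n + k}" by blast
      have "i \<notin> B" "j \<notin> B" using k(1,2,3) i j unfolding k(4) by auto
      moreover have "B \<in> pm_one n" unfolding pm_one_def using k by blast
      ultimately show "B \<in> pm_one n - {{i, n + i}, {j, n + j}}" by blast
    qed
  qed
  moreover have "{i, n + i, j, n + j} = {i, j, n + id i, n + id j}" by auto
  ultimately show ?thesis unfolding Jmerge_def Kv_def by simp
qed

lemma mult_triv:
  assumes J: "partition_on {1..2*n} J" and v: "v permutes {1..n}"
    and i: "i \<in> {1..n}" and j: "j \<in> {1..n}" and ij: "(n+i, n+j) \<in> sb J"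
    and x: "x \<in> {1..2*n}" and y: "y \<in> {1..2*n}"
  shows "(tau n v x, tau n v y) \<in> sb (pm_mult n J (Kv n v i j)) \<longleftrightarrow> (x,y) \<in> sb J"
  using CL[OF J v i j x y] mrg_triv[OF J ij] by simp

lemma transp_perm: "r \<in> {1..n-1} \<Longrightarrow> Transposition.transpose r (Suc r) permutes {1..n}"
  by (rule permutes_swap_id) auto

lemma z_form:
  assumes r: "r \<in> {1..n-1}" and i: "i \<in> {1..n}" and j: "j \<in> {1..n}" and ij: "i < j"
  shows "z_gen n r i j = (Pw n (Transposition.transpose r (Suc r)), Kv n (Transposition.transpose r (Suc r)) i j)"
proof -
  let ?s = "Transposition.transpose r (Suc r)"
  have s: "?s permutes {1..n}" using transp_perm[OF r] .
  have n: "n \<ge> 1" using i by auto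
  have one: "1 \<in> {1..n}" using n by auto
  have idp: "id permutes {1..n}" by simp
  have f: "pm_mult n (pm_one n) (simple_transp n r) = Pw n ?s"
    unfolding pm_one_Pw st_Pw using Pw_mult[OF idp s n] by simp
  have KP: "partition_on {1..2*n} (Kv n id i j)" using Kv_part[OF idp i j] .
  have g: "pm_mult n (Jmerge n i j) (simple_transp n r) = Kv n ?s i j"
    unfolding Jmerge_Kv[OF i j less_imp_neq[OF ij]] st_Pw
  proof (rule tau_eq[OF s pm_mult_part Kv_part[OF s i j]])
    fix x y assume x: "x \<in> {1..2*n}" and y: "y \<in> {1..2*n}"
    have "(tau n ?s x, tau n ?s y) \<in> sb (pm_mult n (Kv n id i j) (Pw n ?s)) \<longleftrightarrow> (x,y) \<in> sb (Kv n id i j)"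
      using mult_triv[OF KP s one one sb_refl[OF KP, of "n+1"] x y] Kv_same[OF one] n by auto
    also have "\<dots> \<longleftrightarrow> (tau n ?s x, tau n ?s y) \<in> sb (Kv n ?s i j)"
      using sb_Kv_tau[OF idp s i j x y] by simp
    finally show "(tau n ?s x, tau n ?s y) \<in> sb (pm_mult n (Kv n id i j) (Pw n ?s)) \<longleftrightarrow>
        (tau n ?s x, tau n ?s y) \<in> sb (Kv n ?s i j)" .
  qed
  show ?thesis unfolding z_gen_def e_gen_def RS_mult_def using f g by simp
qed

lemma e_form:
  assumes i: "i \<in> {1..n}" and j: "j \<in> {1..n}" and ij: "i < j"
  shows "e_gen n i j = (Pw n id, Kv n id i j)"
  unfolding e_gen_def pm_one_Pw Jmerge_Kv[OF i j less_imp_neq[OF ij]] by simp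

lemma RS_E:
  assumes "(I,J) \<in> RS n"
  shows "\<exists>u. u permutes {1..n} \<and> I = Pw n u \<and> partition_on {1..2*n} J \<and> sb (Pw n u) \<subseteq> sb J"
proof -
  obtain u where u: "u permutes {1..n}" "I = Pw n u" using assms symgrp_E unfolding RS_def by blast
  have J: "partition_on {1..2*n} J" using assms unfolding RS_def setparts_def by auto
  have "refines I J" using assms unfolding RS_def by auto
  then have "sb I \<subseteq> sb J" using refines_iff[OF _ J] Pw_part[OF u(1)] u(2) by blast
  then show ?thesis using u J by blast
qed

lemma RS_I:
  assumes "u permutes {1..n}" "partition_on {1..2*n} J" "sb (Pw n u) \<subseteq> sb J"
  shows "(Pw n u, J) \<in> RS n"
  using assms symgrp_Pw refines_iff[OF Pw_part[OF assms(1)] assms(2)] unfolding RS_def setparts_def by blast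

lemma sb_Pw_top:
  assumes u: "u permutes {1..n}" and a: "a \<in> {1..n}" and b: "b \<in> {1..n}" and ab: "(a,b) \<in> sb (Pw n u)"
  shows "a = b"
proof -
  obtain k where k: "k \<in> {1..n}" "a \<in> {k, n + u k}" "b \<in> {k, n + u k}" using ab unfolding sb_Pw by blast
  have "u k \<ge> 1" using perm_facts(1)[OF u k(1)] by auto
  then show ?thesis using k a b by auto
qed

lemma not_sym_pair:
  assumes x: "(Pw n u, J) \<in> RS n" and ns: "(Pw n u, J) \<notin> RS_sym n"
  shows "\<exists>a b. a \<in> {1..n} \<and> b \<in> {1..n} \<and> a \<noteq> b \<and> (a,b) \<in> sb J"
proof (rule ccontr)
  assume c: "\<not> ?thesis"
  obtain u' where u': "u' permutes {1..n}" "Pw n u = Pw n u'" "partition_on {1..2*n} J" "sb (Pw n u') \<subseteq> sb J"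
    using RS_E[OF x] by blast
  have "J = Pw n u'" using NE[OF u'(3) u'(1) u'(4)] c by blast
  then have "(Pw n u, J) \<in> RS_sym n" using u' symgrp_Pw[OF u'(1)] unfolding RS_sym_def by auto
  then show False using ns by blast
qed

lemma closure:
  assumes x: "(I,J) \<in> RS n" and ns: "(I,J) \<notin> RS_sym n" and y: "(H,K) \<in> RS n"
  shows "RS_mult n (I,J) (H,K) \<in> RS n - RS_sym n"
proof -
  obtain u where u: "u permutes {1..n}" "I = Pw n u" "partition_on {1..2*n} J" "sb (Pw n u) \<subseteq> sb J"
    using RS_E[OF x] by blast
  obtain v where v: "v permutes {1..n}" "H = Pw n v" "partition_on {1..2*n} K" "sb (Pw n v) \<subseteq> sb K"
    using RS_E[OF y] by blast
  obtain a b where ab: "a \<in> {1..n}" "b \<in> {1..n}" "a \<noteq> b" "(a,b) \<in> sb J"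
    using not_sym_pair[of n u J] x ns u(2) by blast
  have n: "n \<ge> 1" using ab by auto
  have IH: "pm_mult n I H = Pw n (v \<circ> u)" using Pw_mult[OF u(1) v(1) n] u v by simp
  have vu: "v \<circ> u permutes {1..n}" using permutes_compose[OF u(1) v(1)] .
  have lk: "pm_link n I H \<subseteq> pm_link n J K"
  proof
    fix z assume "z \<in> pm_link n I H"
    moreover obtain z1 z2 where zz: "z = (z1,z2)" by fastforce
    ultimately have "(z1,z2) \<in> sb I \<or> (\<exists>a b. (a,b) \<in> sb H \<and> z1 = a+n \<and> z2 = b+n)"
      using link_cases by blast
    then show "z \<in> pm_link n J K"
    proof
      assume "(z1,z2) \<in> sb I" then show ?thesis using u(2,4) link_J zz by blast
    next
      assume "\<exists>a b. (a,b) \<in> sb H \<and> z1 = a+n \<and> z2 = b+n"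
      then obtain a b where "(a,b) \<in> sb K" "z1 = a+n" "z2 = b+n" using v(2,4) by blast
      then show ?thesis using link_K zz by blast
    qed
  qed
  have "Rm n I H \<subseteq> Rm n J K"
    unfolding Rm_def using rtrancl_mono[OF lk] by blast
  then have sub: "sb (Pw n (v \<circ> u)) \<subseteq> sb (pm_mult n J K)"
    using sb_pm_mult[of n I H] sb_pm_mult[of n J K] IH by simp
  have mem: "(pm_mult n I H, pm_mult n J K) \<in> RS n"
    unfolding IH by (rule RS_I[OF vu pm_mult_part sub])
  have "(a,b) \<in> sb (pm_mult n J K)"
  proof -
    have "(a,b) \<in> pm_link n J K" by (rule link_J[OF ab(4)])
    moreover have "pm_lift n a = a" "pm_lift n b = b" using ab unfolding pm_lift_def by auto
    ultimately show ?thesis unfolding sb_pm_mult Rm_def using ab by auto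
  qed
  moreover have "(a,b) \<notin> sb (Pw n (v \<circ> u))" using sb_Pw_top[OF vu ab(1,2)] ab(3) by blast
  ultimately have "pm_mult n J K \<noteq> pm_mult n I H" using IH by auto
  then have "(pm_mult n I H, pm_mult n J K) \<notin> RS_sym n" unfolding RS_sym_def by auto
  then show ?thesis using mem unfolding RS_mult_def by simp
qed

inductive_set adjs :: "nat \<Rightarrow> (nat \<Rightarrow> nat) set" for n where
  adj_id: "id \<in> adjs n"
| adj_step: "u \<in> adjs n \<Longrightarrow> r \<in> {1..n-1} \<Longrightarrow> Transposition.transpose r (Suc r) \<circ> u \<in> adjs n"

lemma adjs_perm: "u \<in> adjs n \<Longrightarrow> u permutes {1..n}"
proof (induction rule: adjs.induct)
  case adj_id then show ?case by (rule permutes_id)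
next
  case (adj_step u r) then show ?case using permutes_compose[OF adj_step(3) transp_perm[OF adj_step(2)]] by blast
qed

lemma adjs_comp: "u \<in> adjs n \<Longrightarrow> v \<in> adjs n \<Longrightarrow> u \<circ> v \<in> adjs n"
proof (induction rule: adjs.induct)
  case adj_id then show ?case by simp
next
  case (adj_step u r)
  have "Transposition.transpose r (Suc r) \<circ> (u \<circ> v) \<in> adjs n" using adj_step by (intro adjs.adj_step)
  then show ?case by (simp only: o_assoc)
qed

lemma adj_s: "r \<in> {1..n-1} \<Longrightarrow> Transposition.transpose r (Suc r) \<in> adjs n"
  using adjs.adj_step[OF adjs.adj_id] by simp

lemma transp_adjs_aux: "a \<ge> 1 \<Longrightarrow> a + Suc d \<le> n \<Longrightarrow> Transposition.transpose a (a + Suc d) \<in> adjs n"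
proof (induction d)
  case 0 then show ?case using adj_s[of a n] by auto
next
  case (Suc d)
  let ?c = "a + Suc d"
  let ?s = "Transposition.transpose ?c (Suc ?c)"
  have "Transposition.transpose a (a + Suc (Suc d)) = ?s \<circ> (Transposition.transpose a ?c \<circ> ?s)"
    by (auto simp: fun_eq_iff transpose_def)
  moreover have "?s \<in> adjs n" using Suc.prems by (intro adj_s) auto
  moreover have "Transposition.transpose a ?c \<in> adjs n" using Suc by auto
  ultimately show ?case using adjs_comp by metis
qed

lemma transp_adjs:
  assumes a: "a \<in> {1..n}" and b: "b \<in> {1..n}"
  shows "Transposition.transpose a b \<in> adjs n"
proof -
  consider "a = b" | "a < b" | "b < a" by linarith
  then show ?thesis
  proof cases
    case 1 then show ?thesis using adjs.adj_id by (simp only: 1 transpose_same)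
  next
    case 2
    then obtain d where "b = a + Suc d" using less_imp_Suc_add[OF 2] by auto
    then show ?thesis using transp_adjs_aux[of a d n] a b by auto
  next
    case 3
    then obtain d where "a = b + Suc d" using less_imp_Suc_add[OF 3] by auto
    then show ?thesis using transp_adjs_aux[of b d n] a b transpose_commute[of a b] by auto
  qed
qed

lemma all_adjs:
  assumes w: "w permutes {1..n}" shows "w \<in> adjs n"
  using w finite_atLeastAtMost
proof (induction rule: permutes_induct)
  case id then show ?case by (rule adjs.adj_id)
next
  case (swap a b p)
  then show ?case using adjs_comp transp_adjs by blast
qed

definition gens :: "nat \<Rightarrow> (setpart \<times> setpart) set" where
  "gens n = ({z_gen n r i j | r i j. r \<in> {1..n-1} \<and> i \<in> {1..n} \<and> j \<in> {1..n} \<and> i < j}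
            \<union> {e_gen n i j | i j. i \<in> {1..n} \<and> j \<in> {1..n} \<and> i < j})"

lemma tau_invol:
  assumes r: "r \<in> {1..n-1}" and x: "x \<in> {1..2*n}"
  shows "tau n (Transposition.transpose r (Suc r)) (tau n (Transposition.transpose r (Suc r)) x) = x"
proof -
  let ?s = "Transposition.transpose r (Suc r)"
  show ?thesis
  proof (cases "x \<le> n")
    case True then show ?thesis unfolding tau_def by simp
  next
    case False
    then have "x - n \<in> {1..n}" using x by auto
    then have "?s (x - n) \<ge> 1" using perm_facts(1)[OF transp_perm[OF r]] by fastforce
    then show ?thesis using False unfolding tau_def by simp
  qed
qed

lemma img_part:
  assumes r: "r \<in> {1..n-1}" and J: "partition_on {1..2*n} J"
  defines "t \<equiv> tau n (Transposition.transpose r (Suc r))"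
  shows "partition_on {1..2*n} ((`) t ` J)"
    and "\<And>x y. (x,y) \<in> sb ((`) t ` J) \<longleftrightarrow> x \<in> {1..2*n} \<and> y \<in> {1..2*n} \<and> (t x, t y) \<in> sb J"
proof -
  let ?A = "{1..2*n}"
  have s: "Transposition.transpose r (Suc r) permutes {1..n}" by (rule transp_perm[OF r])
  have tA: "t x \<in> ?A" if "x \<in> ?A" for x unfolding t_def using tau_A[OF s that] .
  have tt: "t (t x) = x" if "x \<in> ?A" for x unfolding t_def using tau_invol[OF r that] .
  have inj: "inj_on t ?A" by (rule inj_onI) (metis tt)
  have img: "t ` ?A = ?A"
  proof
    show "t ` ?A \<subseteq> ?A" using tA by blast
    show "?A \<subseteq> t ` ?A"
    proof
      fix x assume x: "x \<in> ?A"
      then have "x = t (t x)" using tt by simp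
      then show "x \<in> t ` ?A" using tA[OF x] by blast
    qed
  qed
  have ne: "{} \<notin> (`) t ` J" using partition_onD3[OF J] by auto
  have "partition_on (t ` ?A) ((`) t ` J - {{}})" by (rule partition_on_inj_image[OF J inj])
  then show "partition_on ?A ((`) t ` J)" using img ne by simp
  have BA: "B \<subseteq> ?A" if "B \<in> J" for B using that partition_onD1[OF J] by blast
  have mem: "x \<in> t ` B \<longleftrightarrow> x \<in> ?A \<and> t x \<in> B" if B: "B \<in> J" for x B
  proof
    assume "x \<in> t ` B"
    then obtain b where "b \<in> B" "x = t b" by blast
    then show "x \<in> ?A \<and> t x \<in> B" using BA[OF B] tA tt by auto
  next
    assume "x \<in> ?A \<and> t x \<in> B"
    then show "x \<in> t ` B" using tt by (metis image_eqI)
  qed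
  fix x y
  show "(x,y) \<in> sb ((`) t ` J) \<longleftrightarrow> x \<in> ?A \<and> y \<in> ?A \<and> (t x, t y) \<in> sb J"
    unfolding sb_def using mem by auto
qed

lemma Kv_comm: "Kv n v i j = Kv n v j i"
  unfolding Kv_def by (simp add: insert_commute)

lemma sb_Pw_id_bot:
  assumes c: "c \<in> {1..n}"
  shows "(x, n + c) \<in> sb (Pw n id) \<longleftrightarrow> x \<in> {c, n + c}"
proof
  assume "(x, n + c) \<in> sb (Pw n id)"
  then obtain k where k: "k \<in> {1..n}" "x \<in> {k, n + k}" "n + c \<in> {k, n + k}" unfolding sb_Pw by auto
  then have "k = c" using c by auto
  then show "x \<in> {c, n + c}" using k by simp
next
  assume "x \<in> {c, n + c}"
  then show "(x, n + c) \<in> sb (Pw n id)" unfolding sb_Pw using c by auto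
qed

lemma Kv_mrg:
  assumes i: "i \<in> {1..n}" and j: "j \<in> {1..n}" and ij: "i \<noteq> j"
  shows "sb (Kv n id i j) = mrg (sb (Pw n id)) (n+i) (n+j)"
proof (rule set_eqI)
  fix z :: "nat \<times> nat"
  obtain x y :: nat where z: "z = (x,y)" by fastforce
  have "(x,y) \<in> sb (Kv n id i j) \<longleftrightarrow> (x,y) \<in> mrg (sb (Pw n id)) (n+i) (n+j)"
  proof
    assume "(x,y) \<in> sb (Kv n id i j)"
    then have "(\<exists>k\<in>{1..n}-{i,j}. x \<in> {k, n + k} \<and> y \<in> {k, n + k}) \<or>
      (x \<in> {i, j, n + i, n + j} \<and> y \<in> {i, j, n + i, n + j})" unfolding sb_Kv by simp
    then show "(x,y) \<in> mrg (sb (Pw n id)) (n+i) (n+j)"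
    proof (elim disjE bexE conjE)
      fix k assume "k \<in> {1..n} - {i,j}" "x \<in> {k, n + k}" "y \<in> {k, n + k}"
      then have "(x,y) \<in> sb (Pw n id)" unfolding sb_Pw by auto
      then show ?thesis unfolding mrg_def by blast
    next
      assume "x \<in> {i, j, n + i, n + j}" "y \<in> {i, j, n + i, n + j}"
      then have "((x, n+i) \<in> sb (Pw n id) \<or> (x, n+j) \<in> sb (Pw n id)) \<and>
                 ((y, n+i) \<in> sb (Pw n id) \<or> (y, n+j) \<in> sb (Pw n id))"
        unfolding sb_Pw_id_bot[OF i] sb_Pw_id_bot[OF j] by auto
      then show ?thesis unfolding mrg_def by blast
    qed
  next
    assume "(x,y) \<in> mrg (sb (Pw n id)) (n+i) (n+j)"
    then consider (s) "(x,y) \<in> sb (Pw n id)"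
      | (b) "(x, n+i) \<in> sb (Pw n id) \<or> (x, n+j) \<in> sb (Pw n id)"
            "(y, n+i) \<in> sb (Pw n id) \<or> (y, n+j) \<in> sb (Pw n id)"
      unfolding mrg_def by blast
    then show "(x,y) \<in> sb (Kv n id i j)"
    proof cases
      case s
      then obtain k where k: "k \<in> {1..n}" "x \<in> {k, n + k}" "y \<in> {k, n + k}" unfolding sb_Pw by auto
      then show ?thesis unfolding sb_Kv by (cases "k \<in> {i,j}") auto
    next
      case b
      then have "x \<in> {i, j, n + i, n + j}" "y \<in> {i, j, n + i, n + j}"
        unfolding sb_Pw_id_bot[OF i] sb_Pw_id_bot[OF j] by auto
      then show ?thesis unfolding sb_Kv by auto
    qed
  qed
  then show "z \<in> sb (Kv n id i j) \<longleftrightarrow> z \<in> mrg (sb (Pw n id)) (n+i) (n+j)" using z by simp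
qed

lemma gen_e: assumes "i \<in> {1..n}" "j \<in> {1..n}" "i < j"
  shows "e_gen n i j \<in> gen_semigroup (RS_mult n) (gens n)"
proof (rule gen_semigroup.base)
  show "e_gen n i j \<in> gens n" unfolding gens_def using assms by blast
qed

lemma gen_z: assumes "r \<in> {1..n-1}" "i \<in> {1..n}" "j \<in> {1..n}" "i < j"
  shows "z_gen n r i j \<in> gen_semigroup (RS_mult n) (gens n)"
proof (rule gen_semigroup.base)
  show "z_gen n r i j \<in> gens n" unfolding gens_def using assms by blast
qed

lemma stepA:
  assumes "partition_on {1..2*n} J" "sb (Pw n id) \<subseteq> sb J"
    "a \<in> {1..n}" "b \<in> {1..n}" "a \<noteq> b" "(a,b) \<in> sb J"
  shows "(Pw n id, J) \<in> gen_semigroup (RS_mult n) (gens n)"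
  using assms
proof (induction "card (sb J)" arbitrary: J a b rule: less_induct)
  case less
  let ?A = "{1..2*n}"
  have J: "partition_on ?A J" and sub: "sb (Pw n id) \<subseteq> sb J" and a: "a \<in> {1..n}" and b: "b \<in> {1..n}"
    and ab: "a \<noteq> b" and abJ: "(a,b) \<in> sb J" using less.prems by auto
  have n: "n \<ge> 1" using a by auto
  have idp: "id permutes {1..n}" by simp
  have bA: "b \<in> ?A" "n + b \<in> ?A" and aA: "a \<in> ?A" "n + a \<in> ?A" using a b by auto
  have "(a, n + a) \<in> sb (Pw n id)" "(b, n + b) \<in> sb (Pw n id)" using a b unfolding sb_Pw by auto
  then have pa: "(a, n + a) \<in> sb J" "(b, n + b) \<in> sb J" using sub by auto
  have nab: "(n + a, n + b) \<in> sb J"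
    using sb_trans[OF J sb_trans[OF J sb_sym[OF pa(1)] abJ] pa(2)] .
  have na_out: "n + a \<notin> {b, n + b}" and a_out: "a \<notin> {b, n + b}" using a b ab by auto
  define S' where "S' = {(x,y). (x,y) \<in> sb J \<and> x \<notin> {b, n+b} \<and> y \<notin> {b, n+b}} \<union> {b, n+b} \<times> {b, n+b}"
  have S'sub: "S' \<subseteq> sb J"
  proof
    fix z assume "z \<in> S'"
    then show "z \<in> sb J"
      unfolding S'_def using pa(2) sb_sym[OF pa(2)] sb_refl[OF J bA(1)] sb_refl[OF J bA(2)] by blast
  qed
  have eqS: "equiv ?A S'"
  proof (rule equivI)
    show "S' \<subseteq> ?A \<times> ?A" using S'sub sb_sub[OF J] by auto
    show "refl_on ?A S'" unfolding refl_on_def S'_def using sb_refl[OF J] by auto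
    show "sym S'" unfolding sym_def S'_def using sb_sym by blast
    show "trans S'"
    proof (rule transI)
      fix x y z assume xy: "(x,y) \<in> S'" and yz: "(y,z) \<in> S'"
      show "(x,z) \<in> S'"
      proof (cases "y \<in> {b, n+b}")
        case True then show ?thesis using xy yz unfolding S'_def by blast
      next
        case False
        then have "(x,y) \<in> sb J" "(y,z) \<in> sb J" "x \<notin> {b, n+b}" "z \<notin> {b, n+b}"
          using xy yz unfolding S'_def by auto
        then show ?thesis using sb_trans[OF J] unfolding S'_def by blast
      qed
    qed
  qed
  define J' where "J' = ?A // S'"
  have J': "partition_on ?A J'" unfolding J'_def by (rule partition_on_quotient[OF eqS])
  have sbJ': "sb J' = S'" unfolding J'_def by (rule sb_quot[OF eqS])
  have PwS': "sb (Pw n id) \<subseteq> S'"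
  proof
    fix z assume z: "z \<in> sb (Pw n id)"
    obtain x y where xy: "z = (x,y)" by fastforce
    have "(x,y) \<in> sb (Pw n id)" using z xy by simp
    then obtain k where k: "k \<in> {1..n}" "x \<in> {k, n + k}" "y \<in> {k, n + k}" unfolding sb_Pw by auto
    show "z \<in> S'"
    proof (cases "k = b")
      case True then show ?thesis using k xy unfolding S'_def by auto
    next
      case False
      then have "x \<notin> {b, n+b}" "y \<notin> {b, n+b}" using k b by auto
      then show ?thesis using z sub xy unfolding S'_def by auto
    qed
  qed
  have mrgS: "mrg S' (n+a) (n+b) = sb J"
  proof
    show "mrg S' (n+a) (n+b) \<subseteq> sb J"
    proof
      fix z assume z: "z \<in> mrg S' (n+a) (n+b)"
      obtain x y where xy: "z = (x,y)" by fastforce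
      show "z \<in> sb J"
      proof (cases "(x,y) \<in> S'")
        case True then show ?thesis using S'sub xy by auto
      next
        case False
        then have "((x,n+a) \<in> S' \<or> (x,n+b) \<in> S') \<and> ((y,n+a) \<in> S' \<or> (y,n+b) \<in> S')"
          using z xy unfolding mrg_def by auto
        then have "((x,n+a) \<in> sb J \<or> (x,n+b) \<in> sb J) \<and> ((y,n+a) \<in> sb J \<or> (y,n+b) \<in> sb J)"
          using S'sub by blast
        then have "(x, n+b) \<in> sb J" "(y, n+b) \<in> sb J" using sb_trans[OF J _ nab] by blast+
        then show ?thesis using xy sb_trans[OF J] sb_sym by blast
      qed
    qed
    show "sb J \<subseteq> mrg S' (n+a) (n+b)"
    proof
      fix z assume z: "z \<in> sb J"
      obtain x y where xy: "z = (x,y)" by fastforce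
      have zz: "(x,y) \<in> sb J" using z xy by simp
      have nbS: "\<And>w. w \<in> {b, n+b} \<Longrightarrow> (w, n+b) \<in> S'" unfolding S'_def by auto
      have naS: "\<And>w. w \<notin> {b, n+b} \<Longrightarrow> (w, n+b) \<in> sb J \<Longrightarrow> (w, n+a) \<in> S'"
        unfolding S'_def using sb_trans[OF J _ sb_sym[OF nab]] na_out by blast
      consider "x \<notin> {b, n+b}" "y \<notin> {b, n+b}" | "x \<in> {b, n+b}" "y \<in> {b, n+b}"
        | "x \<in> {b, n+b}" "y \<notin> {b, n+b}" | "x \<notin> {b, n+b}" "y \<in> {b, n+b}" by blast
      then show "z \<in> mrg S' (n+a) (n+b)"
      proof cases
        case 1 then show ?thesis using zz xy unfolding mrg_def S'_def by blast
      next
        case 2 then show ?thesis using xy unfolding mrg_def S'_def by blast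
      next
        case 3
        have "(x, n+b) \<in> sb J" using 3(1) pa(2) sb_refl[OF J bA(2)] by auto
        then have "(y, n+b) \<in> sb J" using sb_trans[OF J sb_sym[OF zz]] by blast
        then have "(y, n+a) \<in> S'" using naS 3(2) by blast
        then show ?thesis using nbS[OF 3(1)] xy unfolding mrg_def by blast
      next
        case 4
        have "(y, n+b) \<in> sb J" using 4(2) pa(2) sb_refl[OF J bA(2)] by auto
        then have "(x, n+b) \<in> sb J" using sb_trans[OF J zz] by blast
        then have "(x, n+a) \<in> S'" using naS 4(1) by blast
        then show ?thesis using nbS[OF 4(2)] xy unfolding mrg_def by blast
      qed
    qed
  qed
  define i' where "i' = min a b"
  define j' where "j' = max a b"
  have i'j': "i' \<in> {1..n}" "j' \<in> {1..n}" "i' < j'" using a b ab unfolding i'_def j'_def by auto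
  have mrg': "mrg S' (n+i') (n+j') = sb J"
  proof (cases "a < b")
    case True then show ?thesis using mrgS unfolding i'_def j'_def by simp
  next
    case False
    then have "i' = b" "j' = a" using ab unfolding i'_def j'_def by auto
    then show ?thesis using mrgS mrg_comm[of S' "n+a" "n+b"] by simp
  qed
  have Kv': "Kv n id i' j' = Kv n id a b"
  proof (cases "a < b")
    case True then show ?thesis unfolding i'_def j'_def by simp
  next
    case False
    then have "i' = b" "j' = a" using ab unfolding i'_def j'_def by auto
    then show ?thesis using Kv_comm[of n id a b] by simp
  qed
  have "sb J \<subseteq> ?A \<times> ?A" using sb_sub[OF J] by auto
  then have fin: "finite (sb J)" by (rule finite_subset) simp
  have abS: "(a,b) \<notin> S'" using a_out unfolding S'_def by auto
  have lt: "card (sb J') < card (sb J)"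
    unfolding sbJ' using psubset_card_mono[OF fin] S'sub abJ abS by blast
  show ?case
  proof (cases "\<exists>a' b'. a' \<in> {1..n} \<and> b' \<in> {1..n} \<and> a' \<noteq> b' \<and> (a',b') \<in> S'")
    case True
    then obtain a' b' where ab': "a' \<in> {1..n}" "b' \<in> {1..n}" "a' \<noteq> b'" "(a',b') \<in> sb J'"
      unfolding sbJ' by blast
    have IH: "(Pw n id, J') \<in> gen_semigroup (RS_mult n) (gens n)"
      using less.hyps[OF lt J'] PwS' ab' sbJ' by blast
    have step: "RS_mult n (Pw n id, J') (e_gen n i' j') \<in> gen_semigroup (RS_mult n) (gens n)"
      by (rule gen_semigroup.step[OF IH gen_e[OF i'j']])
    have f: "pm_mult n (Pw n id) (Pw n id) = Pw n id" using Pw_mult[OF idp idp n] by simp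
    have g: "pm_mult n J' (Kv n id i' j') = J"
    proof (rule part_eq_sb[OF pm_mult_part J])
      show "sb (pm_mult n J' (Kv n id i' j')) = sb J"
      proof (rule set_eqI)
        fix z :: "nat \<times> nat"
        obtain x y where xy: "z = (x,y)" by fastforce
        show "z \<in> sb (pm_mult n J' (Kv n id i' j')) \<longleftrightarrow> z \<in> sb J"
        proof (cases "x \<in> ?A \<and> y \<in> ?A")
          case True
          then show ?thesis using CL[OF J' idp i'j'(1,2), of x y] tau_id[of x n] tau_id[of y n] sbJ' mrg' xy
            by simp
        next
          case False
          then show ?thesis using sb_sub[OF pm_mult_part] sb_sub[OF J] xy by blast
        qed
      qed
    qed
    have "RS_mult n (Pw n id, J') (e_gen n i' j') = (Pw n id, J)"
      unfolding e_form[OF i'j'] RS_mult_def using f g by simp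
    then show ?thesis using step by simp
  next
    case False
    then have "J' = Pw n id" using NE[OF J' idp] PwS' sbJ' by blast
    then have "S' = sb (Pw n id)" using sbJ' by simp
    then have "sb J = sb (Kv n id a b)" using mrgS Kv_mrg[OF a b ab] by simp
    then have "J = Kv n id i' j'" unfolding Kv' by (rule part_eq_sb[OF J Kv_part[OF idp a b]])
    then show ?thesis using gen_e[OF i'j'] unfolding e_form[OF i'j'] by simp
  qed
qed

definition Cw :: "nat \<Rightarrow> (nat \<Rightarrow> nat) \<Rightarrow> bool" where
  "Cw n w \<longleftrightarrow> (\<forall>J. partition_on {1..2*n} J \<and> sb (Pw n w) \<subseteq> sb J \<and>
      (\<exists>a b. a \<in> {1..n} \<and> b \<in> {1..n} \<and> a \<noteq> b \<and> (a,b) \<in> sb J)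
      \<longrightarrow> (Pw n w, J) \<in> gen_semigroup (RS_mult n) (gens n))"

lemma C_id: "Cw n id"
  unfolding Cw_def using stepA by blast

lemma stepB:
  assumes r: "r \<in> {1..n-1}" and u: "u permutes {1..n}" and C: "Cw n u"
  shows "Cw n (Transposition.transpose r (Suc r) \<circ> u)"
  unfolding Cw_def
proof (intro allI impI, elim conjE exE)
  let ?A = "{1..2*n}"
  let ?s = "Transposition.transpose r (Suc r)"
  let ?t = "tau n ?s"
  fix J a b
  assume J: "partition_on ?A J" and sub: "sb (Pw n (?s \<circ> u)) \<subseteq> sb J"
    and a: "a \<in> {1..n}" and b: "b \<in> {1..n}" and ab: "a \<noteq> b" and abJ: "(a,b) \<in> sb J"
  have s: "?s permutes {1..n}" by (rule transp_perm[OF r])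
  have n: "n \<ge> 1" using a by auto
  define J0 where "J0 = (`) ?t ` J"
  have J0: "partition_on ?A J0" unfolding J0_def by (rule img_part(1)[OF r J])
  have sbJ0: "\<And>x y. (x,y) \<in> sb J0 \<longleftrightarrow> x \<in> ?A \<and> y \<in> ?A \<and> (?t x, ?t y) \<in> sb J"
    unfolding J0_def by (rule img_part(2)[OF r J])
  have sub0: "sb (Pw n u) \<subseteq> sb J0"
  proof
    fix z assume z: "z \<in> sb (Pw n u)"
    obtain x y where xy: "z = (x,y)" by fastforce
    have xyA: "x \<in> ?A" "y \<in> ?A" using sb_sub[OF Pw_part[OF u]] z xy by auto
    have "(?t x, ?t y) \<in> sb (Pw n (?s \<circ> u))" using sb_Pw_tau[OF u s xyA] z xy by simp
    then show "z \<in> sb J0" using sub sbJ0 xyA xy by blast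
  qed
  have ta: "?t a = a" "?t b = b" using a b unfolding tau_def by auto
  have abJ0: "(a,b) \<in> sb J0" using sbJ0 ta abJ a b by auto
  have G0: "(Pw n u, J0) \<in> gen_semigroup (RS_mult n) (gens n)"
    using C J0 sub0 a b ab abJ0 unfolding Cw_def by blast
  note pf = perm_facts[OF u]
  have ua: "u a \<in> {1..n}" "u b \<in> {1..n}" "u a \<noteq> u b" using pf(1) pf(2) a b ab by auto
  have "(a, n + u a) \<in> sb (Pw n u)" "(b, n + u b) \<in> sb (Pw n u)" using a b unfolding sb_Pw by auto
  then have "(a, n + u a) \<in> sb J0" "(b, n + u b) \<in> sb J0" using sub0 by auto
  then have uab: "(n + u a, n + u b) \<in> sb J0"
    using sb_trans[OF J0 sb_trans[OF J0 sb_sym abJ0]] by blast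
  define i' where "i' = min (u a) (u b)"
  define j' where "j' = max (u a) (u b)"
  have i'j': "i' \<in> {1..n}" "j' \<in> {1..n}" "i' < j'" using ua unfolding i'_def j'_def by auto
  have ij0: "(n + i', n + j') \<in> sb J0"
  proof (cases "u a < u b")
    case True then show ?thesis using uab unfolding i'_def j'_def by simp
  next
    case False
    then have "i' = u b" "j' = u a" using ua unfolding i'_def j'_def by auto
    then show ?thesis using sb_sym[OF uab] by simp
  qed
  have step: "RS_mult n (Pw n u, J0) (z_gen n r i' j') \<in> gen_semigroup (RS_mult n) (gens n)"
    by (rule gen_semigroup.step[OF G0 gen_z[OF r i'j']])
  have f: "pm_mult n (Pw n u) (Pw n ?s) = Pw n (?s \<circ> u)" by (rule Pw_mult[OF u s n])
  have g: "pm_mult n J0 (Kv n ?s i' j') = J"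
  proof (rule tau_eq[OF s pm_mult_part J])
    fix x y assume x: "x \<in> ?A" and y: "y \<in> ?A"
    show "(?t x, ?t y) \<in> sb (pm_mult n J0 (Kv n ?s i' j')) \<longleftrightarrow> (?t x, ?t y) \<in> sb J"
      using mult_triv[OF J0 s i'j'(1,2) ij0 x y] sbJ0 x y by blast
  qed
  have "RS_mult n (Pw n u, J0) (z_gen n r i' j') = (Pw n (?s \<circ> u), J)"
    unfolding z_form[OF r i'j'] RS_mult_def using f g by simp
  then show "(Pw n (?s \<circ> u), J) \<in> gen_semigroup (RS_mult n) (gens n)" using step by simp
qed

lemma adjs_C: "u \<in> adjs n \<Longrightarrow> Cw n u"
proof (induction rule: adjs.induct)
  case adj_id then show ?case by (rule C_id)
next
  case (adj_step u r) then show ?case using stepB adjs_perm by blast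
qed

lemma gens_sub: "gens n \<subseteq> RS n - RS_sym n"
proof
  fix g assume g: "g \<in> gens n"
  have eRS: "e_gen n i j \<in> RS n - RS_sym n" if i: "i \<in> {1..n}" and j: "j \<in> {1..n}" and ij: "i < j" for i j
  proof -
    have idp: "id permutes {1..n}" by simp
    have sub: "sb (Pw n id) \<subseteq> sb (Kv n id i j)"
    proof
      fix z assume z: "z \<in> sb (Pw n id)"
      obtain x y where xy: "z = (x,y)" by fastforce
      have "(x,y) \<in> sb (Pw n id)" using z xy by simp
      then obtain k where k: "k \<in> {1..n}" "x \<in> {k, n + k}" "y \<in> {k, n + k}" unfolding sb_Pw by auto
      then have "(x,y) \<in> sb (Kv n id i j)" unfolding sb_Kv by (cases "k \<in> {i,j}") auto
      then show "z \<in> sb (Kv n id i j)" using xy by simp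
    qed
    have mem: "(Pw n id, Kv n id i j) \<in> RS n" by (rule RS_I[OF idp Kv_part[OF idp i j] sub])
    have "(i,j) \<in> sb (Kv n id i j)" unfolding sb_Kv by auto
    moreover have "(i,j) \<notin> sb (Pw n id)" using sb_Pw_top[OF idp i j] ij by auto
    ultimately have "Kv n id i j \<noteq> Pw n id" by auto
    then have "(Pw n id, Kv n id i j) \<notin> RS_sym n" unfolding RS_sym_def by auto
    then show ?thesis using mem e_form[OF i j ij] by simp
  qed
  show "g \<in> RS n - RS_sym n"
  proof (cases "g \<in> {e_gen n i j | i j. i \<in> {1..n} \<and> j \<in> {1..n} \<and> i < j}")
    case True then show ?thesis using eRS by blast
  next
    case False
    then obtain r i j where rij: "g = z_gen n r i j" "r \<in> {1..n-1}" "i \<in> {1..n}" "j \<in> {1..n}" "i < j"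
      using g unfolding gens_def by blast
    let ?s = "Transposition.transpose r (Suc r)"
    have s: "?s permutes {1..n}" by (rule transp_perm[OF rij(2)])
    have e: "e_gen n i j \<in> RS n - RS_sym n" using eRS rij by blast
    obtain I J where IJ: "e_gen n i j = (I,J)" by fastforce
    have st: "(simple_transp n r, simple_transp n r) \<in> RS n"
      unfolding st_Pw by (rule RS_I[OF s Pw_part[OF s]]) simp
    have "RS_mult n (I,J) (simple_transp n r, simple_transp n r) \<in> RS n - RS_sym n"
      using closure[of I J n "simple_transp n r" "simple_transp n r"] e IJ st by simp
    then show ?thesis using rij(1) IJ unfolding z_gen_def by simp
  qed
qed

theorem main_eq: "gen_semigroup (RS_mult n) (gens n) = RS n - RS_sym n"
proof
  show "gen_semigroup (RS_mult n) (gens n) \<subseteq> RS n - RS_sym n"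
  proof
    fix x assume "x \<in> gen_semigroup (RS_mult n) (gens n)"
    then show "x \<in> RS n - RS_sym n"
    proof (induction rule: gen_semigroup.induct)
      case (base x) then show ?case using gens_sub by blast
    next
      case (step x y)
      obtain I J where x: "x = (I,J)" by fastforce
      obtain H K where y: "y = (H,K)" by fastforce
      show ?case using closure[of I J n H K] step x y by simp
    qed
  qed
  show "RS n - RS_sym n \<subseteq> gen_semigroup (RS_mult n) (gens n)"
  proof
    fix x assume x: "x \<in> RS n - RS_sym n"
    obtain I J where IJ: "x = (I,J)" by fastforce
    obtain u where u: "u permutes {1..n}" "I = Pw n u" "partition_on {1..2*n} J" "sb (Pw n u) \<subseteq> sb J"
      using RS_E[of I J n] x IJ by blast
    obtain a b where ab: "a \<in> {1..n}" "b \<in> {1..n}" "a \<noteq> b" "(a,b) \<in> sb J"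
      using not_sym_pair[of n u J] x IJ u(2) by blast
    have "Cw n u" by (rule adjs_C[OF all_adjs[OF u(1)]])
    then show "x \<in> gen_semigroup (RS_mult n) (gens n)" using u ab IJ unfolding Cw_def by blast
  qed
qed

theorem proposition5p18:
  fixes n :: nat
  shows "gen_semigroup (RS_mult n)
           ({z_gen n r i j | r i j. r \<in> {1..n-1} \<and> i \<in> {1..n} \<and> j \<in> {1..n} \<and> i < j}
            \<union> {e_gen n i j | i j. i \<in> {1..n} \<and> j \<in> {1..n} \<and> i < j})
         = RS n - RS_sym n"
  using main_eq[of n] unfolding gens_def .

end
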